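(* In the setting below, for each $N\in\mathbb N$ let $u_N:\Omega\to U$ be measurable with values in $\mathcal D(\psi)$. Then for all $N\in\mathbb N$ and $\nu>0$, $$\mathbb E[\Psi(u_N)]\le \mathbb E[\hat\Psi_N(u_N)]+2\,\mathbb E[L_{\mathrm Df}(\boldsymbol\xi)]\,r_{\mathrm{ad}}\,\nu+\frac{\sqrt3\,\tau_{\mathrm Df}\,r_{\mathrm{ad}}}{\sqrt N}\big(\mathcal N(\nu;B(\mathcal D(\psi)))\big)^{1/2}.$$
   Context: Let $U$ be a separable Hilbert space (identified with its dual, inner product $(\cdot,\cdot)_U$), $W$ a separable Banach space with dual $W^*$, and $B:U\to W$ a compact linear operator with adjoint $B^*$. Let $\psi:U\to[0,\infty]$ be proper, closed and convex with bounded domain $\mathcal D(\psi)=\{u:\psi(u)<\infty\}$, whose diameter is $r_{\mathrm{ad}}$. Let $U_0\subset U$ be open, convex and bounded with $\mathcal D(\psi)\subset U_0$. Let $\Xi$ be a complete separable metric space, $\boldsymbol\xi$ a $\Xi$-valued random element, and $\boldsymbol\xi^1,\boldsymbol\xi^2,\ldots$ i.i.d. copies of $\boldsymbol\xi$ on a complete probability space $(\Omega,\mathcal F,P)$. Let $f:B(U_0)\times\Xi\to\mathbb R$ be such that $f(\cdot,\xi)$ is continuous on $B(\mathcal D(\psi))$, $f(w,\cdot)$ is measurable, and $|f(Bu,\xi)|\le \zeta_f(\xi)$ on $U_0\times\Xi$ with $\zeta_f$ integrable. Assume: for each $\xi$, $g_\xi(u)=f(Bu,\xi)$ is continuously differentiable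 on $U_0$; there is a Carathéodory map $\mathrm D_wf:B(\mathcal D(\psi))\times\Xi\to W^*$ with $\nabla g_\xi(u)=B^*\mathrm D_wf(Bu,\xi)$ on $\mathcal D(\psi)\times\Xi$; there is an integrable $\zeta_{\mathrm Df}$ with $\|\nabla g_\xi(u)\|_U\le\zeta_{\mathrm Df}(\xi)$ on $U_0\times\Xi$ and $\|\mathrm D_wf(Bu,\xi)\|_{W^*}\le\zeta_{\mathrm Df}(\xi)$ on $\mathcal D(\psi)\times\Xi$. Moreover: there is an integrable $L_{\mathrm Df}:\Xi\to[0,\infty)$ with $\|\nabla g_\xi(u_2)-\nabla g_\xi(u_1)\|_U\le L_{\mathrm Df}(\xi)\|Bu_2-Bu_1\|_W$ for all $u_1,u_2\in\mathcal D(\psi)$, $\xi\in\Xi$; and there is $\tau_{\mathrm Df}>0$ with $\mathbb E[\exp(\tau_{\mathrm Df}^{-2}\|\nabla g_{\boldsymbol\xi}(u)-\mathbb E[\nabla g_{\boldsymbol\xi}(u)]\|_U^2)]\le e$ for all $u\in\mathcal D(\psi)$. Define $\mathrm DF(w)=\mathbb E[\mathrm D_wf(w,\boldsymbol\xi)]$, $\mathrm D\hat F_N(w)=\frac1N\sum_{i=1}^N\mathrm D_wf(w,\boldsymbol\xi^i)$, and on $\mathcal D(\psi)$ the gap functionals $\Psi(u)=\sup_{v\in\mathcal D(\psi)}[(B^*\mathrm DF(Bu),u-v)_U+\psi(u)-\psi(v)]$ and $\hat\Psi_N(u)=\sup_{v\in\mathcal D(\psi)}[(B^*\mathrm D\hat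 F_N(Bu),u-v)_U+\psi(u)-\psi(v)]$. For $\nu>0$, $\mathcal N(\nu;B(\mathcal D(\psi)))$ is the minimal number of points in a $\nu$-net (in $\|\cdot\|_W$) of the totally bounded set $B(\mathcal D(\psi))$. *)

theory Defs
  imports "HOL-Probability.Probability"
begin

definition dom_psi :: "('u \<Rightarrow> ennreal) \<Rightarrow> 'u set" where
  "dom_psi \<psi> = {u. \<psi> u < \<infinity>}"

definition ennconvex :: "('u::real_vector \<Rightarrow> ennreal) \<Rightarrow> bool" where
  "ennconvex \<psi> \<longleftrightarrow> (\<forall>x y t. 0 \<le> t \<and> t \<le> 1 \<longrightarrow>
      \<psi> (t *\<^sub>R x + (1 - t) *\<^sub>R y) \<le> ennreal t * \<psi> x + ennreal (1 - t) * \<psi> y)"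

definition ennclosed :: "('u::topological_space \<Rightarrow> ennreal) \<Rightarrow> bool" where
  "ennclosed \<psi> \<longleftrightarrow> (\<forall>c. closed {u. \<psi> u \<le> c})"

definition ennproper :: "('u \<Rightarrow> ennreal) \<Rightarrow> bool" where
  "ennproper \<psi> \<longleftrightarrow> (\<exists>u. \<psi> u < \<infinity>)"

text \<open>Gap functional. G w is the (derivative) functional at w, given by its action
  G w h on h in W; thus (B^* G(Bu), u - v)_U = G (B u) (B (u - v)).\<close>
definition gap_fun :: "('u::real_vector \<Rightarrow> ennreal) \<Rightarrow> ('u \<Rightarrow> 'w) \<Rightarrow> ('w \<Rightarrow> 'w \<Rightarrow> real)
    \<Rightarrow> 'u \<Rightarrow> real" where
  "gap_fun \<psi> B G u = (SUP v\<in>dom_psi \<psi>.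
      G (B u) (B (u - v)) + enn2real (\<psi> u) - enn2real (\<psi> v))"

definition covering_number :: "real \<Rightarrow> 'a::metric_space set \<Rightarrow> nat" where
  "covering_number \<nu> S =
     (LEAST n. \<exists>F. finite F \<and> F \<subseteq> S \<and> card F = n \<and> S \<subseteq> (\<Union>x\<in>F. cball x \<nu>))"

end

theory Submission
  imports Defs
begin

lemma meas_lip_factor:
  fixes l :: "'a \<Rightarrow> 'b::metric_space" and g :: "'a \<Rightarrow> 'c::metric_space"
  assumes lm: "l \<in> borel_measurable M" and C: "C \<ge> 0"
    and lip: "\<And>a b. dist (g a) (g b) \<le> C * dist (l a) (l b)"
  shows "g \<in> borel_measurable M"
proof -
  define T where "T y = g (SOME a. l a = y)" for y
  have Tl: "T (l a) = g a" for a
  proof -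
    have "l (SOME a'. l a' = l a) = l a" by (rule someI) (rule refl)
    then have "dist (T (l a)) (g a) \<le> 0" using lip[of "SOME a'. l a' = l a" a] by (simp add: T_def)
    then show ?thesis by simp
  qed
  have "lipschitz_on C (range l) T"
    by (rule lipschitz_onI) (auto simp: Tl lip C)
  then have cT: "continuous_on (range l) T" by (rule lipschitz_on_continuous_on)
  show ?thesis
  proof (rule borel_measurableI)
    fix S :: "'c set" assume "open S"
    then obtain A where A: "open A" "A \<inter> range l = T -` S \<inter> range l"
      using cT unfolding continuous_on_open_invariant by blast
    have "g -` S \<inter> space M = l -` A \<inter> space M"
    proof -
      have "g a \<in> S \<longleftrightarrow> l a \<in> A" for a
        using A(2) Tl[of a] by (metis (no_types, lifting) IntD1 IntI Int_iff rangeI vimage_eq)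
      then show ?thesis by auto
    qed
    also have "\<dots> \<in> sets M" using lm A(1) by (simp add: measurable_sets borel_open)
    finally show "g -` S \<inter> space M \<in> sets M" .
  qed
qed

lemma riesz_meas:
  fixes B :: "'u::real_inner \<Rightarrow> 'w::real_normed_vector"
    and gr :: "'a \<Rightarrow> 'u" and l :: "'a \<Rightarrow> ('w \<Rightarrow>\<^sub>L real)"
  assumes B: "bounded_linear B" and adj: "\<And>\<xi> h. gr \<xi> \<bullet> h = blinfun_apply (l \<xi>) (B h)"
    and lm: "l \<in> borel_measurable M"
  shows "gr \<in> borel_measurable M"
proof -
  obtain K where K: "K > 0" "\<And>x. norm (B x) \<le> norm x * K"
    using bounded_linear.pos_bounded[OF B] by blast
  have lip: "dist (gr a) (gr b) \<le> K * dist (l a) (l b)" for a b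
  proof -
    let ?d = "gr a - gr b"
    have "norm ?d ^ 2 = gr a \<bullet> ?d - gr b \<bullet> ?d"
      by (simp add: power2_norm_eq_inner inner_diff_left)
    also have "\<dots> = blinfun_apply (l a - l b) (B ?d)"
      by (simp add: adj blinfun.diff_left)
    also have "\<dots> \<le> norm (l a - l b) * norm (B ?d)"
      by (metis abs_le_D1 norm_blinfun real_norm_def)
    also have "\<dots> \<le> norm (l a - l b) * (norm ?d * K)"
      by (intro mult_left_mono K norm_ge_zero)
    finally have *: "norm ?d * norm ?d \<le> (K * norm (l a - l b)) * norm ?d"
      by (simp add: power2_eq_square algebra_simps)
    show ?thesis
    proof (cases "norm ?d = 0")
      case True then show ?thesis using K by (simp add: dist_norm)
    next
      case False
      then have "norm ?d > 0" by simp
      with * have "norm ?d \<le> K * norm (l a - l b)" by (simp add: mult_le_cancel_right)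
      then show ?thesis by (simp add: dist_norm)
    qed
  qed
  show ?thesis by (rule meas_lip_factor[OF lm _ lip]) (use K in simp)
qed

lemma nn_integral_add_le_meas:
  assumes hm: "h \<in> borel_measurable M"
    and le: "\<And>x. x \<in> space M \<Longrightarrow> f x \<le> g x + h x"
  shows "integral\<^sup>N M f \<le> integral\<^sup>N M g + integral\<^sup>N M h"
  unfolding nn_integral_def_finite[of M f]
proof (rule SUP_least)
  fix s assume "s \<in> {s. simple_function M s \<and> s \<le> f \<and> (\<forall>x. s x < top)}"
  then have s: "simple_function M s" "s \<le> f" "\<And>x. s x < top" by auto
  have sm: "s \<in> borel_measurable M" using s(1) by (rule borel_measurable_simple_function)
  define s' where "s' x = s x - h x" for x
  have s'm: "s' \<in> borel_measurable M" unfolding s'_def using sm hm by measurable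
  have "integral\<^sup>S M s = integral\<^sup>N M s" using s(1) by (simp add: nn_integral_eq_simple_integral)
  also have "\<dots> \<le> integral\<^sup>N M (\<lambda>x. s' x + h x)"
  proof (rule nn_integral_mono)
    fix x assume "x \<in> space M"
    show "s x \<le> s' x + h x"
    proof (cases "h x \<le> s x")
      case True then show ?thesis by (simp add: s'_def diff_add_self_ennreal)
    next
      case False then have "s x \<le> h x" by simp
      also have "h x \<le> s' x + h x" by simp
      finally show ?thesis .
    qed
  qed
  also have "\<dots> = integral\<^sup>N M s' + integral\<^sup>N M h"
    by (rule nn_integral_add[OF s'm hm])
  also have "integral\<^sup>N M s' \<le> integral\<^sup>N M g"
  proof (rule nn_integral_mono)
    fix x assume "x \<in> space M"
    have "s x \<le> g x + h x" using s(2) le[OF \<open>x \<in> space M\<close>] by (metis le_fun_def order_trans)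
    then show "s' x \<le> g x" unfolding s'_def using s(3)[of x] by (auto simp add: ennreal_minus_le_iff add.commute)
  qed
  finally show "integral\<^sup>S M s \<le> integral\<^sup>N M g + integral\<^sup>N M h" by (simp add: add_right_mono order_trans)
qed

lemma indep_pair:
  assumes P: "prob_space M" and ind: "prob_space.indep_vars M (\<lambda>_. borel) X I"
    and ij: "i \<in> I" "j \<in> I" "i \<noteq> j"
  shows "prob_space.indep_var M borel (X i) borel (X j)"
proof -
  interpret prob_space M by (rule P)
  have "indep_var
    borel ((\<lambda>f. f i) \<circ> (\<lambda>\<omega>. restrict (\<lambda>i. X i \<omega>) {i}))
    borel ((\<lambda>f. f j) \<circ> (\<lambda>\<omega>. restrict (\<lambda>i. X i \<omega>) {j}))"
    using ij by (intro indep_var_compose[OF indep_var_restrict[OF ind]]) auto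
  also have "((\<lambda>f. f i) \<circ> (\<lambda>\<omega>. restrict (\<lambda>i. X i \<omega>) {i})) = X i" by auto
  also have "((\<lambda>f. f j) \<circ> (\<lambda>\<omega>. restrict (\<lambda>i. X i \<omega>) {j})) = X j" by auto
  finally show ?thesis .
qed

lemma cross_zero:
  fixes X Y :: "'a \<Rightarrow> 'x::topological_space" and \<phi> :: "'x \<Rightarrow> 'u::{real_inner, banach, second_countable_topology}"
  assumes P: "prob_space M" and ind: "prob_space.indep_var M borel X borel Y"
    and Xd: "distr M borel X = Q" and Yd: "distr M borel Y = Q"
    and phim: "\<phi> \<in> borel_measurable borel"
    and phii: "integrable Q \<phi>" and phi0: "integral\<^sup>L Q \<phi> = 0"
  shows "integrable M (\<lambda>\<omega>. \<phi> (X \<omega>) \<bullet> \<phi> (Y \<omega>)) \<and> (\<integral>\<omega>. \<phi> (X \<omega>) \<bullet> \<phi> (Y \<omega>) \<partial>M) = 0"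
proof -
  interpret prob_space M by (rule P)
  have Xm: "X \<in> measurable M borel" and Ym: "Y \<in> measurable M borel"
    using ind by (auto dest: indep_var_rv1 indep_var_rv2)
  have joint: "distr M (borel \<Otimes>\<^sub>M borel) (\<lambda>x. (X x, Y x)) = Q \<Otimes>\<^sub>M Q"
    using ind unfolding indep_var_distribution_eq Xd Yd by simp
  interpret Qp: prob_space Q using prob_space_distr[OF Xm] Xd by simp
  interpret QQ: pair_prob_space Q Q ..
  have sQ: "sets Q = sets borel" using Xd by auto
  have phimQ: "\<phi> \<in> borel_measurable Q" using phim by (subst measurable_cong_sets[OF sQ refl])
  define f where "f p = \<phi> (fst p) \<bullet> \<phi> (snd p)" for p
  have fm: "f \<in> borel_measurable (Q \<Otimes>\<^sub>M Q)" unfolding f_def using phimQ by measurable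
  have fint: "integrable (Q \<Otimes>\<^sub>M Q) f"
  proof (rule QQ.Fubini_integrable[OF fm])
    have ib: "integrable Q (\<lambda>a. norm (\<phi> a) * (\<integral>b. norm (\<phi> b) \<partial>Q))"
      using phii by (intro integrable_mult_left integrable_norm)
    have mi: "(\<lambda>x. \<integral>y. norm (f (x, y)) \<partial>Q) \<in> borel_measurable Q"
      using fm by (intro Qp.borel_measurable_lebesgue_integral) simp
    have ae: "AE x in Q. norm (\<integral>y. norm (f (x, y)) \<partial>Q) \<le> norm (norm (\<phi> x) * (\<integral>b. norm (\<phi> b) \<partial>Q))"
    proof (rule AE_I2)
      fix x assume "x \<in> space Q"
      have "(\<integral>y. norm (f (x, y)) \<partial>Q) \<le> (\<integral>y. norm (\<phi> x) * norm (\<phi> y) \<partial>Q)"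
      proof (rule integral_mono)
        show "integrable Q (\<lambda>y. norm (f (x, y)))"
          unfolding f_def using phii by (intro integrable_norm integrable_inner_right) auto
        show "integrable Q (\<lambda>y. norm (\<phi> x) * norm (\<phi> y))" using phii by auto
        show "norm (f (x, y)) \<le> norm (\<phi> x) * norm (\<phi> y)" for y
          unfolding f_def by (simp add: Cauchy_Schwarz_ineq2)
      qed
      also have "\<dots> = norm (\<phi> x) * (\<integral>b. norm (\<phi> b) \<partial>Q)" by simp
      finally show "norm (\<integral>y. norm (f (x, y)) \<partial>Q) \<le> norm (norm (\<phi> x) * (\<integral>b. norm (\<phi> b) \<partial>Q))"
        by (simp add: integral_nonneg_AE)
    qed
    show "integrable Q (\<lambda>x. \<integral>y. norm (f (x, y)) \<partial>Q)"
      by (rule Bochner_Integration.integrable_bound[OF ib mi ae])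
    show "AE x in Q. integrable Q (\<lambda>y. f (x, y))"
      unfolding f_def using phii by (intro AE_I2 integrable_inner_right) auto
  qed
  have pm: "(\<lambda>x. (X x, Y x)) \<in> measurable M (borel \<Otimes>\<^sub>M borel)" using Xm Ym by measurable
  have fmb: "f \<in> borel_measurable (borel \<Otimes>\<^sub>M borel)"
    using fm unfolding measurable_cong_sets[OF sets_pair_measure_cong[OF sQ sQ] refl] .
  have eqf: "(\<lambda>\<omega>. \<phi> (X \<omega>) \<bullet> \<phi> (Y \<omega>)) = (\<lambda>\<omega>. f (X \<omega>, Y \<omega>))" by (simp add: f_def)
  have i1: "integrable M (\<lambda>\<omega>. \<phi> (X \<omega>) \<bullet> \<phi> (Y \<omega>))"
    unfolding eqf using fint by (simp add: integrable_distr_eq[OF pm fmb, symmetric] joint)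
  have "(\<integral>\<omega>. \<phi> (X \<omega>) \<bullet> \<phi> (Y \<omega>) \<partial>M) = integral\<^sup>L (Q \<Otimes>\<^sub>M Q) f"
    unfolding eqf by (simp add: integral_distr[OF pm fmb, symmetric] joint)
  also have "\<dots> = (\<integral>x. (\<integral>y. f (x, y) \<partial>Q) \<partial>Q)" by (rule QQ.integral_fst'[OF fint, symmetric])
  also have "\<dots> = 0" unfolding f_def using phii by (simp add: phi0)
  finally show ?thesis using i1 by simp
qed

lemma gap_le:
  fixes a b :: "'v \<Rightarrow> real"
  assumes D: "D \<noteq> {}" and bdd: "bdd_above (b ` D)" and le: "\<And>v. v \<in> D \<Longrightarrow> a v \<le> b v + c"
  shows "(SUP v\<in>D. a v) \<le> (SUP v\<in>D. b v) + c"
proof (rule cSUP_least[OF D])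
  fix v assume v: "v \<in> D"
  have "b v \<le> (SUP v\<in>D. b v)" by (rule cSUP_upper[OF v bdd])
  then show "a v \<le> (SUP v\<in>D. b v) + c" using le[OF v] by linarith
qed

lemma net_exists:
  fixes S :: "'a::metric_space set"
  assumes SC: "S \<subseteq> C" and C: "compact C" and nu: "\<nu> > 0"
  shows "\<exists>F. finite F \<and> F \<subseteq> S \<and> S \<subseteq> (\<Union>x\<in>F. cball x \<nu>)"
proof -
  obtain k where k: "finite k" "k \<subseteq> C" "C \<subseteq> (\<Union>x\<in>k. ball x (\<nu>/2))"
    using seq_compact_imp_totally_bounded[OF compact_imp_seq_compact[OF C]] nu
    by (meson half_gt_zero)
  define r where "r x = (SOME y. y \<in> S \<inter> ball x (\<nu>/2))" for x
  define F where "F = r ` {x\<in>k. S \<inter> ball x (\<nu>/2) \<noteq> {}}"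
  have rx: "r x \<in> S \<inter> ball x (\<nu>/2)" if "S \<inter> ball x (\<nu>/2) \<noteq> {}" for x
    unfolding r_def using that by (metis (no_types, lifting) ex_in_conv someI)
  have "finite F" unfolding F_def using k(1) by simp
  moreover have "F \<subseteq> S" unfolding F_def using rx by blast
  moreover have "S \<subseteq> (\<Union>x\<in>F. cball x \<nu>)"
  proof
    fix s assume s: "s \<in> S"
    then obtain x where x: "x \<in> k" "s \<in> ball x (\<nu>/2)" using SC k(3) by blast
    then have ne: "S \<inter> ball x (\<nu>/2) \<noteq> {}" using s by blast
    then have "r x \<in> F" unfolding F_def using x by blast
    moreover have "dist (r x) s \<le> \<nu>"
    proof -
      have "dist (r x) s \<le> dist x (r x) + dist x s" by (rule dist_triangle3)
      also have "\<dots> < \<nu>/2 + \<nu>/2" using rx[OF ne] x(2) by (intro add_strict_mono) auto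
      finally show ?thesis by simp
    qed
    ultimately show "s \<in> (\<Union>x\<in>F. cball x \<nu>)" by auto
  qed
  ultimately show ?thesis by blast
qed

lemma covering_number_net:
  fixes S :: "'a::metric_space set"
  assumes SC: "S \<subseteq> C" and C: "compact C" and nu: "\<nu> > 0"
  shows "\<exists>F. finite F \<and> F \<subseteq> S \<and> card F = covering_number \<nu> S \<and> S \<subseteq> (\<Union>x\<in>F. cball x \<nu>)"
proof -
  obtain F where "finite F \<and> F \<subseteq> S \<and> S \<subseteq> (\<Union>x\<in>F. cball x \<nu>)"
    using net_exists[OF assms] by blast
  then have "\<exists>n F. finite F \<and> F \<subseteq> S \<and> card F = n \<and> S \<subseteq> (\<Union>x\<in>F. cball x \<nu>)" by blast
  then show ?thesis unfolding covering_number_def by (rule LeastI_ex)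
qed

theorem theorem3p8:
  fixes M :: "'a measure"
    and B :: "'u::{real_inner, banach, second_countable_topology} \<Rightarrow> 'w::{banach, second_countable_topology}"
    and \<psi> :: "'u \<Rightarrow> ennreal"
    and U0 :: "'u set"
    and xi :: "'a \<Rightarrow> 'x::polish_space"
    and xs :: "nat \<Rightarrow> 'a \<Rightarrow> 'x"
    and f :: "'w \<Rightarrow> 'x \<Rightarrow> real"
    and \<zeta>f \<zeta>Df LDf :: "'x \<Rightarrow> real"
    and gr :: "'x \<Rightarrow> 'u \<Rightarrow> 'u"
    and Dwf :: "'w \<Rightarrow> 'x \<Rightarrow> ('w \<Rightarrow>\<^sub>L real)"
    and \<tau> :: real
    and uN :: "nat \<Rightarrow> 'a \<Rightarrow> 'u"
  assumes prob: "prob_space M"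
    and compl: "complete_measure M"
    and B_lin: "bounded_linear B"
    and B_compact: "compact (closure (B ` cball 0 1))"
    and psi_proper: "ennproper \<psi>"
    and psi_closed: "ennclosed \<psi>"
    and psi_convex: "ennconvex \<psi>"
    and dom_bounded: "bounded (dom_psi \<psi>)"
    and U0_open: "open U0" and U0_convex: "convex U0" and U0_bounded: "bounded U0"
    and dom_U0: "dom_psi \<psi> \<subseteq> U0"
    and xi_meas: "xi \<in> measurable M borel"
    and xs_meas: "\<And>i. i \<ge> 1 \<Longrightarrow> xs i \<in> measurable M borel"
    and xs_indep: "prob_space.indep_vars M (\<lambda>_. borel) xs {1..}"
    and xs_distr: "\<And>i. i \<ge> 1 \<Longrightarrow> distr M borel (xs i) = distr M borel xi"
    and f_cont: "\<And>\<xi>. continuous_on (B ` dom_psi \<psi>) (\<lambda>w. f w \<xi>)"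
    and f_meas: "\<And>w. w \<in> B ` U0 \<Longrightarrow> (\<lambda>\<xi>. f w \<xi>) \<in> borel_measurable borel"
    and f_bound: "\<And>u \<xi>. u \<in> U0 \<Longrightarrow> \<bar>f (B u) \<xi>\<bar> \<le> \<zeta>f \<xi>"
    and \<zeta>f_int: "\<zeta>f \<in> borel_measurable borel" "integrable M (\<lambda>\<omega>. \<zeta>f (xi \<omega>))"
    and g_deriv: "\<And>\<xi> u. u \<in> U0 \<Longrightarrow>
                   ((\<lambda>v. f (B v) \<xi>) has_derivative (\<lambda>h. gr \<xi> u \<bullet> h)) (at u)"
    and g_C1: "\<And>\<xi>. continuous_on U0 (gr \<xi>)"
    and Dwf_cont: "\<And>\<xi>. continuous_on (B ` dom_psi \<psi>) (\<lambda>w. Dwf w \<xi>)"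
    and Dwf_meas: "\<And>w. w \<in> B ` dom_psi \<psi> \<Longrightarrow> (\<lambda>\<xi>. Dwf w \<xi>) \<in> borel_measurable borel"
    and grad_adj: "\<And>u \<xi> h. u \<in> dom_psi \<psi> \<Longrightarrow> gr \<xi> u \<bullet> h = blinfun_apply (Dwf (B u) \<xi>) (B h)"
    and grad_bound: "\<And>u \<xi>. u \<in> U0 \<Longrightarrow> norm (gr \<xi> u) \<le> \<zeta>Df \<xi>"
    and Dwf_bound: "\<And>u \<xi>. u \<in> dom_psi \<psi> \<Longrightarrow> norm (Dwf (B u) \<xi>) \<le> \<zeta>Df \<xi>"
    and \<zeta>Df_int: "\<zeta>Df \<in> borel_measurable borel" "integrable M (\<lambda>\<omega>. \<zeta>Df (xi \<omega>))"
    and LDf_nonneg: "\<And>\<xi>. LDf \<xi> \<ge> 0"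
    and LDf_int: "LDf \<in> borel_measurable borel" "integrable M (\<lambda>\<omega>. LDf (xi \<omega>))"
    and grad_lip: "\<And>u1 u2 \<xi>. u1 \<in> dom_psi \<psi> \<Longrightarrow> u2 \<in> dom_psi \<psi> \<Longrightarrow>
                     norm (gr \<xi> u2 - gr \<xi> u1) \<le> LDf \<xi> * norm (B u2 - B u1)"
    and \<tau>_pos: "\<tau> > 0"
    and subgauss: "\<And>u. u \<in> dom_psi \<psi> \<Longrightarrow>
          (\<integral>\<^sup>+\<omega>. ennreal (exp ((norm (gr (xi \<omega>) u - (\<integral>\<omega>'. gr (xi \<omega>') u \<partial>M)))\<^sup>2 / \<tau>\<^sup>2)) \<partial>M)
            \<le> ennreal (exp 1)"
    and uN_meas: "\<And>N. uN N \<in> borel_measurable M"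
    and uN_dom: "\<And>N \<omega>. \<omega> \<in> space M \<Longrightarrow> uN N \<omega> \<in> dom_psi \<psi>"
  shows "\<forall>N::nat. \<forall>\<nu>::real. N \<ge> 1 \<and> \<nu> > 0 \<longrightarrow>
    (\<integral>\<^sup>+\<omega>. ennreal (gap_fun \<psi> B (\<lambda>w h. \<integral>\<omega>'. blinfun_apply (Dwf w (xi \<omega>')) h \<partial>M) (uN N \<omega>)) \<partial>M)
    \<le> (\<integral>\<^sup>+\<omega>. ennreal (gap_fun \<psi> B
              (\<lambda>w h. (1 / real N) * (\<Sum>i=1..N. blinfun_apply (Dwf w (xs i \<omega>)) h)) (uN N \<omega>)) \<partial>M)
      + ennreal (2 * (\<integral>\<omega>. LDf (xi \<omega>) \<partial>M) * diameter (dom_psi \<psi>) * \<nu>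
          + sqrt 3 * \<tau> * diameter (dom_psi \<psi>) / sqrt (real N)
            * sqrt (real (covering_number \<nu> (B ` dom_psi \<psi>))))"
proof (intro allI impI)
  fix N :: nat and \<nu> :: real
  assume Nnu: "N \<ge> 1 \<and> \<nu> > 0"
  then have N1: "N \<ge> 1" and nu: "\<nu> > 0" by auto
  have Npos: "real N > 0" using N1 by simp
  interpret P: prob_space M by (rule prob)
  define D where "D = dom_psi \<psi>"
  define S where "S = B ` D"
  define K where "K = covering_number \<nu> S"
  have Dne: "D \<noteq> {}" using psi_proper unfolding D_def dom_psi_def ennproper_def by auto
  have Dbd: "bounded D" using dom_bounded D_def by simp
  have DU0: "D \<subseteq> U0" using dom_U0 D_def by simp
  have diam0: "0 \<le> diameter D" using Dbd by (rule diameter_ge_0)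
  obtain R where R: "R > 0" "\<And>u. u \<in> D \<Longrightarrow> norm u \<le> R" using Dbd unfolding bounded_pos by blast
  define C where "C = (\<lambda>y. R *\<^sub>R y) ` closure (B ` cball 0 1)"
  have Ccomp: "compact C" unfolding C_def using B_compact by (rule compact_scaling)
  have SC: "S \<subseteq> C"
  proof
    fix y assume "y \<in> S"
    then obtain u where u: "u \<in> D" "y = B u" unfolding S_def by auto
    have "norm ((1/R) *\<^sub>R u) \<le> 1" using R u by (simp add: field_simps)
    then have "(1/R) *\<^sub>R u \<in> cball 0 1" by simp
    then have "B ((1/R) *\<^sub>R u) \<in> closure (B ` cball 0 1)" by (meson closure_subset image_eqI subsetD)
    moreover have "y = R *\<^sub>R B ((1/R) *\<^sub>R u)"
      using R u by (simp add: linear_cmul[OF bounded_linear.linear[OF B_lin]])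
    ultimately show "y \<in> C" unfolding C_def by blast
  qed
  obtain F where F: "finite F" "F \<subseteq> S" "card F = K" "S \<subseteq> (\<Union>x\<in>F. cball x \<nu>)"
    using covering_number_net[OF SC Ccomp nu] unfolding K_def by blast
  have Fne: "F \<noteq> {}" using F(4) Dne unfolding S_def by auto
  have K1: "K \<ge> 1" using F(1,3) Fne by (metis card_0_eq less_one not_le)
  define rep where "rep y = (SOME u. u \<in> D \<and> B u = y)" for y
  have rep: "rep y \<in> D \<and> B (rep y) = y" if "y \<in> F" for y
  proof -
    have "\<exists>u. u \<in> D \<and> B u = y" using that F(2) unfolding S_def by auto
    then show ?thesis unfolding rep_def by (rule someI_ex)
  qed
  define F' where "F' = rep ` F"
  have F'fin: "finite F'" unfolding F'_def using F(1) by simp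
  have F'D: "F' \<subseteq> D" unfolding F'_def using rep by auto
  have F'K: "card F' \<le> K" unfolding F'_def using F(1,3) card_image_le by metis
  have near: "\<exists>k\<in>F'. norm (B u - B k) \<le> \<nu>" if "u \<in> D" for u
  proof -
    have "B u \<in> S" unfolding S_def using that by simp
    then obtain y where y: "y \<in> F" "dist y (B u) \<le> \<nu>" using F(4) by auto
    then have "norm (B u - B (rep y)) \<le> \<nu>" using rep[OF y(1)] by (simp add: dist_norm norm_minus_commute)
    then show ?thesis unfolding F'_def using y(1) by blast
  qed
  have grm: "(\<lambda>\<xi>. gr \<xi> u) \<in> borel_measurable borel" if u: "u \<in> D" for u
  proof (rule riesz_meas[OF B_lin])
    show "gr \<xi> u \<bullet> h = blinfun_apply (Dwf (B u) \<xi>) (B h)" for \<xi> h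
      using grad_adj u unfolding D_def by simp
    show "(\<lambda>\<xi>. Dwf (B u) \<xi>) \<in> borel_measurable borel"
      using Dwf_meas u unfolding D_def by simp
  qed
  have grint: "integrable M (\<lambda>\<omega>. gr (xi \<omega>) u)" if u: "u \<in> D" for u
  proof (rule Bochner_Integration.integrable_bound[OF \<zeta>Df_int(2)])
    show "(\<lambda>\<omega>. gr (xi \<omega>) u) \<in> borel_measurable M"
      using measurable_compose[OF xi_meas grm[OF u]] .
    show "AE \<omega> in M. norm (gr (xi \<omega>) u) \<le> norm (\<zeta>Df (xi \<omega>))"
    proof (rule AE_I2)
      fix \<omega>
      have "norm (gr (xi \<omega>) u) \<le> \<zeta>Df (xi \<omega>)" using grad_bound u DU0 by blast
      then show "norm (gr (xi \<omega>) u) \<le> norm (\<zeta>Df (xi \<omega>))" by simp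
    qed
  qed
  have xsd: "integrable M (\<lambda>\<omega>. h (xs i \<omega>)) = integrable M (\<lambda>\<omega>. h (xi \<omega>)) \<and>
      (\<integral>\<omega>. h (xs i \<omega>) \<partial>M) = (\<integral>\<omega>. h (xi \<omega>) \<partial>M)"
    if i: "i \<ge> 1" and hm: "h \<in> borel_measurable borel" for i and h :: "'x \<Rightarrow> real"
    using integrable_distr_eq[OF xs_meas[OF i] hm] integrable_distr_eq[OF xi_meas hm]
          integral_distr[OF xs_meas[OF i] hm] integral_distr[OF xi_meas hm] xs_distr[OF i]
    by metis
  define \<mu> where "\<mu> u = (\<integral>\<omega>. gr (xi \<omega>) u \<partial>M)" for u
  define m where "m u \<omega> = (1 / real N) *\<^sub>R (\<Sum>i=1..N. gr (xs i \<omega>) u)" for u \<omega>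
  define EL where "EL = (\<integral>\<omega>. LDf (xi \<omega>) \<partial>M)"
  define Lbar where "Lbar \<omega> = (1 / real N) * (\<Sum>i=1..N. LDf (xs i \<omega>))" for \<omega>
  define Ssum where "Ssum \<omega> = (\<Sum>k\<in>F'. (norm (\<mu> k - m k \<omega>))\<^sup>2)" for \<omega>
  define diam where "diam = diameter D"
  define Dfun where "Dfun \<omega> = diam * (\<nu> * EL + \<nu> * Lbar \<omega> + sqrt (Ssum \<omega>))" for \<omega>
  have EL0: "EL \<ge> 0" unfolding EL_def using LDf_nonneg by (simp add: integral_nonneg_AE)
  have Lbar0: "Lbar \<omega> \<ge> 0" for \<omega> unfolding Lbar_def using LDf_nonneg by (simp add: sum_nonneg)
  have var: "integrable M (\<lambda>\<omega>. (norm (\<mu> k - m k \<omega>))\<^sup>2) \<and> (\<integral>\<omega>. (norm (\<mu> k - m k \<omega>))\<^sup>2 \<partial>M) \<le> 3 * \<tau>\<^sup>2 / real N"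
    if k: "k \<in> D" for k
  proof -
    define \<phi> where "\<phi> \<xi> = \<mu> k - gr \<xi> k" for \<xi>
    have kd: "k \<in> dom_psi \<psi>" using k unfolding D_def .
    have \<phi>m: "\<phi> \<in> borel_measurable borel"
      unfolding \<phi>_def by (rule borel_measurable_diff[OF borel_measurable_const grm[OF k]])
    have gxm: "(\<lambda>\<omega>. gr (xi \<omega>) k) \<in> borel_measurable M" by (rule measurable_compose[OF xi_meas grm[OF k]])
    have \<phi>xm: "(\<lambda>\<omega>. \<phi> (xi \<omega>)) \<in> borel_measurable M" by (rule measurable_compose[OF xi_meas \<phi>m])
    have \<phi>xi_int: "integrable M (\<lambda>\<omega>. \<phi> (xi \<omega>))" unfolding \<phi>_def using grint[OF k] by simp
    have \<phi>int: "integrable (distr M borel xi) \<phi>" using integrable_distr_eq[OF xi_meas \<phi>m] \<phi>xi_int by simp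
    have \<phi>0: "integral\<^sup>L (distr M borel xi) \<phi> = 0"
    proof -
      have "integral\<^sup>L (distr M borel xi) \<phi> = (\<integral>\<omega>. \<phi> (xi \<omega>) \<partial>M)" by (rule integral_distr[OF xi_meas \<phi>m])
      also have "\<dots> = (\<integral>\<omega>. \<mu> k \<partial>M) - (\<integral>\<omega>. gr (xi \<omega>) k \<partial>M)"
        unfolding \<phi>_def by (rule Bochner_Integration.integral_diff) (auto simp: grint[OF k])
      also have "\<dots> = 0" by (simp add: \<mu>_def P.prob_space)
      finally show ?thesis .
    qed
    have sq: "integrable M (\<lambda>\<omega>. (norm (\<phi> (xi \<omega>)))\<^sup>2) \<and> (\<integral>\<omega>. (norm (\<phi> (xi \<omega>)))\<^sup>2 \<partial>M) \<le> 3 * \<tau>\<^sup>2"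
    proof -
      note [measurable] = gxm \<phi>xm
      have nm: "(\<lambda>\<omega>. (norm (\<phi> (xi \<omega>)))\<^sup>2) \<in> borel_measurable M" by measurable
      have pt: "ennreal ((norm (\<phi> (xi \<omega>)))\<^sup>2) \<le> ennreal (\<tau>\<^sup>2) * ennreal (exp ((norm (gr (xi \<omega>) k - (\<integral>\<omega>'. gr (xi \<omega>') k \<partial>M)))\<^sup>2 / \<tau>\<^sup>2))" for \<omega>
      proof -
        let ?x = "(norm (\<phi> (xi \<omega>)))\<^sup>2 / \<tau>\<^sup>2"
        have e: "norm (gr (xi \<omega>) k - (\<integral>\<omega>'. gr (xi \<omega>') k \<partial>M)) = norm (\<phi> (xi \<omega>))"
          unfolding \<phi>_def \<mu>_def by (rule norm_minus_commute)
        have "?x \<le> exp ?x" using exp_ge_add_one_self[of ?x] by linarith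
        then have "(norm (\<phi> (xi \<omega>)))\<^sup>2 \<le> \<tau>\<^sup>2 * exp ?x" using \<tau>_pos by (simp add: field_simps)
        then show ?thesis unfolding e using \<tau>_pos by (simp add: ennreal_mult[symmetric] ennreal_leI)
      qed
      have "(\<integral>\<^sup>+\<omega>. ennreal ((norm (\<phi> (xi \<omega>)))\<^sup>2) \<partial>M)
          \<le> (\<integral>\<^sup>+\<omega>. ennreal (\<tau>\<^sup>2) * ennreal (exp ((norm (gr (xi \<omega>) k - (\<integral>\<omega>'. gr (xi \<omega>') k \<partial>M)))\<^sup>2 / \<tau>\<^sup>2)) \<partial>M)"
        by (rule nn_integral_mono) (rule pt)
      also have "\<dots> = ennreal (\<tau>\<^sup>2) * (\<integral>\<^sup>+\<omega>. ennreal (exp ((norm (gr (xi \<omega>) k - (\<integral>\<omega>'. gr (xi \<omega>') k \<partial>M)))\<^sup>2 / \<tau>\<^sup>2)) \<partial>M)"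
        by (rule nn_integral_cmult) measurable
      also have "\<dots> \<le> ennreal (\<tau>\<^sup>2) * ennreal (exp 1)"
        using subgauss[OF kd] by (intro mult_left_mono) auto
      also have "\<dots> = ennreal (\<tau>\<^sup>2 * exp 1)" by (simp add: ennreal_mult)
      also have "\<dots> \<le> ennreal (3 * \<tau>\<^sup>2)"
        using exp_le by (intro ennreal_leI) (simp add: mult.commute mult_right_mono)
      finally have nn: "(\<integral>\<^sup>+\<omega>. ennreal ((norm (\<phi> (xi \<omega>)))\<^sup>2) \<partial>M) \<le> ennreal (3 * \<tau>\<^sup>2)" .
      have int: "integrable M (\<lambda>\<omega>. (norm (\<phi> (xi \<omega>)))\<^sup>2)"
      proof (rule integrableI_bounded[OF nm])
        have "(\<integral>\<^sup>+\<omega>. ennreal (norm ((norm (\<phi> (xi \<omega>)))\<^sup>2)) \<partial>M) = (\<integral>\<^sup>+\<omega>. ennreal ((norm (\<phi> (xi \<omega>)))\<^sup>2) \<partial>M)"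
          by simp
        also have "\<dots> < \<infinity>" using nn by (simp add: le_less_trans)
        finally show "(\<integral>\<^sup>+\<omega>. ennreal (norm ((norm (\<phi> (xi \<omega>)))\<^sup>2)) \<partial>M) < \<infinity>" .
      qed
      have "ennreal (\<integral>\<omega>. (norm (\<phi> (xi \<omega>)))\<^sup>2 \<partial>M) \<le> ennreal (3 * \<tau>\<^sup>2)"
        using nn nn_integral_eq_integral[OF int] by simp
      then have "(\<integral>\<omega>. (norm (\<phi> (xi \<omega>)))\<^sup>2 \<partial>M) \<le> 3 * \<tau>\<^sup>2" by (simp add: ennreal_le_iff)
      then show ?thesis using int by simp
    qed
    have diag: "integrable M (\<lambda>\<omega>. \<phi> (xs i \<omega>) \<bullet> \<phi> (xs i \<omega>)) \<and> (\<integral>\<omega>. \<phi> (xs i \<omega>) \<bullet> \<phi> (xs i \<omega>) \<partial>M) \<le> 3 * \<tau>\<^sup>2"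
      if i: "i \<ge> 1" for i
    proof -
      have hm: "(\<lambda>\<xi>. (norm (\<phi> \<xi>))\<^sup>2) \<in> borel_measurable borel" using \<phi>m by measurable
      have "(\<lambda>\<omega>. \<phi> (xs i \<omega>) \<bullet> \<phi> (xs i \<omega>)) = (\<lambda>\<omega>. (norm (\<phi> (xs i \<omega>)))\<^sup>2)" by (simp add: power2_norm_eq_inner)
      then show ?thesis using xsd[OF i hm] sq by simp
    qed
    have cross: "integrable M (\<lambda>\<omega>. \<phi> (xs i \<omega>) \<bullet> \<phi> (xs j \<omega>)) \<and> (\<integral>\<omega>. \<phi> (xs i \<omega>) \<bullet> \<phi> (xs j \<omega>) \<partial>M) = 0"
      if ij: "i \<ge> 1" "j \<ge> 1" "i \<noteq> j" for i j
    proof (rule cross_zero[OF prob _ _ _ \<phi>m \<phi>int \<phi>0])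
      show "prob_space.indep_var M borel (xs i) borel (xs j)"
        using indep_pair[OF prob xs_indep, of i j] ij by auto
      show "distr M borel (xs i) = distr M borel xi" using xs_distr ij by auto
      show "distr M borel (xs j) = distr M borel xi" using xs_distr ij by auto
    qed
    have sum\<phi>: "\<mu> k - m k \<omega> = (1 / real N) *\<^sub>R (\<Sum>i=1..N. \<phi> (xs i \<omega>))" for \<omega>
    proof -
      have "(\<Sum>i=1..N. \<phi> (xs i \<omega>)) = real N *\<^sub>R \<mu> k - (\<Sum>i=1..N. gr (xs i \<omega>) k)"
        unfolding \<phi>_def by (simp add: sum_subtractf sum_constant_scaleR)
      then show ?thesis unfolding m_def using Npos by (simp add: scaleR_diff_right)
    qed
    have expand: "(norm (\<mu> k - m k \<omega>))\<^sup>2 = (1 / real N)\<^sup>2 * (\<Sum>i=1..N. \<Sum>j=1..N. \<phi> (xs i \<omega>) \<bullet> \<phi> (xs j \<omega>))" for \<omega>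
    proof -
      have sw: "(\<Sum>y=1..N. \<Sum>x=1..N. \<phi> (xs x \<omega>) \<bullet> \<phi> (xs y \<omega>)) = (\<Sum>i=1..N. \<Sum>j=1..N. \<phi> (xs i \<omega>) \<bullet> \<phi> (xs j \<omega>))"
        by (rule sum.swap)
      show ?thesis
        unfolding sum\<phi> power2_norm_eq_inner inner_scaleR_left inner_scaleR_right inner_sum_left inner_sum_right
          sum_distrib_left[symmetric] sw
        by (simp only: power2_eq_square mult.assoc)
    qed
    have intij: "integrable M (\<lambda>\<omega>. \<phi> (xs i \<omega>) \<bullet> \<phi> (xs j \<omega>))" if "i \<in> {1..N}" "j \<in> {1..N}" for i j
      using diag cross that by (cases "i = j") auto
    have intj: "integrable M (\<lambda>\<omega>. \<Sum>j=1..N. \<phi> (xs i \<omega>) \<bullet> \<phi> (xs j \<omega>))" if "i \<in> {1..N}" for i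
      using intij that by (intro Bochner_Integration.integrable_sum) auto
    have intS: "integrable M (\<lambda>\<omega>. \<Sum>i=1..N. \<Sum>j=1..N. \<phi> (xs i \<omega>) \<bullet> \<phi> (xs j \<omega>))"
      by (rule Bochner_Integration.integrable_sum) (erule intj)
    have int: "integrable M (\<lambda>\<omega>. (norm (\<mu> k - m k \<omega>))\<^sup>2)"
      unfolding expand using intS by (intro integrable_mult_right)
    have "(\<integral>\<omega>. (norm (\<mu> k - m k \<omega>))\<^sup>2 \<partial>M) = (1 / real N)\<^sup>2 * (\<integral>\<omega>. (\<Sum>i=1..N. \<Sum>j=1..N. \<phi> (xs i \<omega>) \<bullet> \<phi> (xs j \<omega>)) \<partial>M)"
      unfolding expand by simp
    also have "(\<integral>\<omega>. (\<Sum>i=1..N. \<Sum>j=1..N. \<phi> (xs i \<omega>) \<bullet> \<phi> (xs j \<omega>)) \<partial>M)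
        = (\<Sum>i=1..N. \<integral>\<omega>. (\<Sum>j=1..N. \<phi> (xs i \<omega>) \<bullet> \<phi> (xs j \<omega>)) \<partial>M)"
      by (rule Bochner_Integration.integral_sum) (rule intj)
    also have "\<dots> = (\<Sum>i=1..N. \<Sum>j=1..N. \<integral>\<omega>. \<phi> (xs i \<omega>) \<bullet> \<phi> (xs j \<omega>) \<partial>M)"
      by (intro sum.cong refl Bochner_Integration.integral_sum intij) auto
    also have "\<dots> = (\<Sum>i=1..N. \<integral>\<omega>. \<phi> (xs i \<omega>) \<bullet> \<phi> (xs i \<omega>) \<partial>M)"
    proof (rule sum.cong[OF refl])
      fix i assume i: "i \<in> {1..N}"
      have "(\<Sum>j=1..N. \<integral>\<omega>. \<phi> (xs i \<omega>) \<bullet> \<phi> (xs j \<omega>) \<partial>M)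
          = (\<Sum>j=1..N. if j = i then (\<integral>\<omega>. \<phi> (xs i \<omega>) \<bullet> \<phi> (xs i \<omega>) \<partial>M) else 0)"
        using cross i by (intro sum.cong refl) auto
      also have "\<dots> = (\<integral>\<omega>. \<phi> (xs i \<omega>) \<bullet> \<phi> (xs i \<omega>) \<partial>M)" using i by simp
      finally show "(\<Sum>j=1..N. \<integral>\<omega>. \<phi> (xs i \<omega>) \<bullet> \<phi> (xs j \<omega>) \<partial>M) = (\<integral>\<omega>. \<phi> (xs i \<omega>) \<bullet> \<phi> (xs i \<omega>) \<partial>M)" .
    qed
    also have "\<dots> \<le> real (card {1..N}) * (3 * \<tau>\<^sup>2)"
      using diag by (intro sum_bounded_above) auto
    finally have "(\<integral>\<omega>. (norm (\<mu> k - m k \<omega>))\<^sup>2 \<partial>M) \<le> (1 / real N)\<^sup>2 * (real N * (3 * \<tau>\<^sup>2))"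
      by (simp add: mult_left_mono)
    also have "\<dots> = 3 * \<tau>\<^sup>2 / real N" using Npos by (simp add: power2_eq_square field_simps)
    finally show ?thesis using int by simp
  qed
  have Ssum0: "Ssum \<omega> \<ge> 0" for \<omega> unfolding Ssum_def by (simp add: sum_nonneg)
  have Dfun_int: "integrable M Dfun \<and> (\<integral>\<omega>. Dfun \<omega> \<partial>M) \<le> 2 * EL * diameter (dom_psi \<psi>) * \<nu>
          + sqrt 3 * \<tau> * diameter (dom_psi \<psi>) / sqrt (real N) * sqrt (real K)"
  proof -
    have Lm: "LDf \<in> borel_measurable borel" by (rule LDf_int(1))
    have Lxs: "integrable M (\<lambda>\<omega>. LDf (xs i \<omega>)) \<and> (\<integral>\<omega>. LDf (xs i \<omega>) \<partial>M) = EL" if "i \<ge> 1" for i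
      using xsd[OF that Lm] LDf_int(2) unfolding EL_def by simp
    have Lsum_int: "integrable M (\<lambda>\<omega>. \<Sum>i=1..N. LDf (xs i \<omega>))"
      using Lxs by (intro Bochner_Integration.integrable_sum) auto
    have Lbar_int: "integrable M Lbar" unfolding Lbar_def using Lsum_int by (intro integrable_mult_right)
    have "(\<integral>\<omega>. (\<Sum>i=1..N. LDf (xs i \<omega>)) \<partial>M) = (\<Sum>i=1..N. (\<integral>\<omega>. LDf (xs i \<omega>) \<partial>M))"
      using Lxs by (intro Bochner_Integration.integral_sum) auto
    also have "\<dots> = (\<Sum>i=1..N. EL)" using Lxs by (intro sum.cong) auto
    finally have LsE: "(\<integral>\<omega>. (\<Sum>i=1..N. LDf (xs i \<omega>)) \<partial>M) = real N * EL" by simp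
    have Lbar_E: "(\<integral>\<omega>. Lbar \<omega> \<partial>M) = EL" unfolding Lbar_def using LsE Npos by simp
    have Ssum_int: "integrable M Ssum" unfolding Ssum_def using var F'D by (intro Bochner_Integration.integrable_sum) auto
    have "(\<integral>\<omega>. Ssum \<omega> \<partial>M) = (\<Sum>k\<in>F'. \<integral>\<omega>. (norm (\<mu> k - m k \<omega>))\<^sup>2 \<partial>M)"
      unfolding Ssum_def using var F'D by (intro Bochner_Integration.integral_sum) auto
    also have "\<dots> \<le> real (card F') * (3 * \<tau>\<^sup>2 / real N)"
      using var F'D by (intro sum_bounded_above) auto
    also have "\<dots> \<le> real K * (3 * \<tau>\<^sup>2 / real N)"
      using F'K Npos by (intro mult_right_mono) auto
    finally have Ssum_E: "(\<integral>\<omega>. Ssum \<omega> \<partial>M) \<le> real K * (3 * \<tau>\<^sup>2 / real N)" .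
    define a where "a = sqrt (real K * (3 * \<tau>\<^sup>2 / real N))"
    have apos: "a > 0" using K1 \<tau>_pos Npos by (simp add: a_def)
    have asq: "a\<^sup>2 = real K * (3 * \<tau>\<^sup>2 / real N)" unfolding a_def using Npos by simp
    have sqle: "sqrt (Ssum \<omega>) \<le> (Ssum \<omega> / a + a) / 2" for \<omega>
    proof -
      have "0 \<le> (sqrt (Ssum \<omega>) - a)\<^sup>2" by simp
      also have "\<dots> = Ssum \<omega> - 2 * a * sqrt (Ssum \<omega>) + a\<^sup>2"
        using Ssum0[of \<omega>] by (simp add: power2_diff)
      finally have "2 * a * sqrt (Ssum \<omega>) \<le> Ssum \<omega> + a\<^sup>2" by simp
      then show ?thesis using apos by (simp add: field_simps power2_eq_square)
    qed
    have sqm: "(\<lambda>\<omega>. sqrt (Ssum \<omega>)) \<in> borel_measurable M"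
      using borel_measurable_integrable[OF Ssum_int] by measurable
    have bint: "integrable M (\<lambda>\<omega>. (Ssum \<omega> / a + a) / 2)" using Ssum_int by simp
    have sq_int: "integrable M (\<lambda>\<omega>. sqrt (Ssum \<omega>))"
    proof (rule Bochner_Integration.integrable_bound[OF bint sqm])
      show "AE \<omega> in M. norm (sqrt (Ssum \<omega>)) \<le> norm ((Ssum \<omega> / a + a) / 2)"
        using sqle Ssum0 by (intro AE_I2) (metis abs_of_nonneg order_trans real_norm_def real_sqrt_ge_zero)
    qed
    have "(\<integral>\<omega>. sqrt (Ssum \<omega>) \<partial>M) \<le> (\<integral>\<omega>. (Ssum \<omega> / a + a) / 2 \<partial>M)"
      by (rule integral_mono[OF sq_int bint sqle])
    also have "\<dots> = ((\<integral>\<omega>. Ssum \<omega> \<partial>M) / a + a) / 2" using Ssum_int by (simp add: P.prob_space)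
    also have "\<dots> \<le> (a\<^sup>2 / a + a) / 2"
    proof -
      have "(\<integral>\<omega>. Ssum \<omega> \<partial>M) / a \<le> a\<^sup>2 / a" using Ssum_E asq apos by (intro divide_right_mono) auto
      then show ?thesis by (rule divide_right_mono[OF add_right_mono]) simp
    qed
    also have "\<dots> = a" using apos by (simp add: power2_eq_square)
    finally have sqE: "(\<integral>\<omega>. sqrt (Ssum \<omega>) \<partial>M) \<le> a" .
    have Dint: "integrable M Dfun" unfolding Dfun_def using Lbar_int sq_int by simp
    have "(\<integral>\<omega>. Dfun \<omega> \<partial>M) = diam * (\<nu> * EL + \<nu> * EL + (\<integral>\<omega>. sqrt (Ssum \<omega>) \<partial>M))"
      unfolding Dfun_def using Lbar_int sq_int Lbar_E by (simp add: P.prob_space)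
    also have "\<dots> \<le> diam * (\<nu> * EL + \<nu> * EL + a)"
      using sqE diam0 unfolding diam_def by (intro mult_left_mono) auto
    also have "a = sqrt 3 * \<tau> / sqrt (real N) * sqrt (real K)"
      unfolding a_def using \<tau>_pos Npos by (simp add: real_sqrt_mult real_sqrt_divide)
    finally show ?thesis using Dint unfolding diam_def D_def by (simp add: algebra_simps)
  qed
  have Dfun0: "Dfun \<omega> \<ge> 0" for \<omega>
    unfolding Dfun_def diam_def using diam0 EL0 Lbar0 nu Ssum0 by (intro mult_nonneg_nonneg add_nonneg_nonneg) auto
  have pw: "gap_fun \<psi> B (\<lambda>w h. \<integral>\<omega>'. blinfun_apply (Dwf w (xi \<omega>')) h \<partial>M) (uN N \<omega>)
      \<le> gap_fun \<psi> B (\<lambda>w h. (1 / real N) * (\<Sum>i=1..N. blinfun_apply (Dwf w (xs i \<omega>)) h)) (uN N \<omega>) + Dfun \<omega>"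
    if \<omega>: "\<omega> \<in> space M" for \<omega>
  proof -
    let ?u = "uN N \<omega>"
    have u: "?u \<in> D" using uN_dom[OF \<omega>] unfolding D_def .
    have ud: "?u \<in> dom_psi \<psi>" using uN_dom[OF \<omega>] .
    have eqG: "(\<integral>\<omega>'. blinfun_apply (Dwf (B ?u) (xi \<omega>')) (B (?u - v)) \<partial>M) = \<mu> ?u \<bullet> (?u - v)" for v
    proof -
      have "(\<integral>\<omega>'. blinfun_apply (Dwf (B ?u) (xi \<omega>')) (B (?u - v)) \<partial>M) = (\<integral>\<omega>'. gr (xi \<omega>') ?u \<bullet> (?u - v) \<partial>M)"
        using grad_adj[OF ud] by simp
      also have "\<dots> = \<mu> ?u \<bullet> (?u - v)" unfolding \<mu>_def using grint[OF u] by simp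
      finally show ?thesis .
    qed
    have eqH: "(1 / real N) * (\<Sum>i=1..N. blinfun_apply (Dwf (B ?u) (xs i \<omega>)) (B (?u - v))) = m ?u \<omega> \<bullet> (?u - v)" for v
      unfolding m_def using grad_adj[OF ud] by (simp add: inner_sum_left)
    have gG: "gap_fun \<psi> B (\<lambda>w h. \<integral>\<omega>'. blinfun_apply (Dwf w (xi \<omega>')) h \<partial>M) ?u
       = (SUP v\<in>D. \<mu> ?u \<bullet> (?u - v) + enn2real (\<psi> ?u) - enn2real (\<psi> v))"
      unfolding gap_fun_def D_def[symmetric] using eqG by simp
    have gH: "gap_fun \<psi> B (\<lambda>w h. (1 / real N) * (\<Sum>i=1..N. blinfun_apply (Dwf w (xs i \<omega>)) h)) ?u
       = (SUP v\<in>D. m ?u \<omega> \<bullet> (?u - v) + enn2real (\<psi> ?u) - enn2real (\<psi> v))"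
      unfolding gap_fun_def D_def[symmetric] using eqH by simp
    obtain k where k: "k \<in> F'" "norm (B ?u - B k) \<le> \<nu>" using near[OF u] by blast
    have kD: "k \<in> D" using k(1) F'D by auto
    have kd: "k \<in> dom_psi \<psi>" using kD unfolding D_def .
    have t1: "norm (\<mu> ?u - \<mu> k) \<le> \<nu> * EL"
    proof -
      have "\<mu> ?u - \<mu> k = (\<integral>\<omega>'. gr (xi \<omega>') ?u - gr (xi \<omega>') k \<partial>M)"
        unfolding \<mu>_def using grint[OF u] grint[OF kD] by simp
      then have "norm (\<mu> ?u - \<mu> k) \<le> (\<integral>\<omega>'. norm (gr (xi \<omega>') ?u - gr (xi \<omega>') k) \<partial>M)"
        by (simp add: integral_norm_bound)
      also have "\<dots> \<le> (\<integral>\<omega>'. LDf (xi \<omega>') * norm (B ?u - B k) \<partial>M)"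
      proof (rule integral_mono)
        show "integrable M (\<lambda>\<omega>'. norm (gr (xi \<omega>') ?u - gr (xi \<omega>') k))"
          using grint[OF u] grint[OF kD] by simp
        show "integrable M (\<lambda>\<omega>'. LDf (xi \<omega>') * norm (B ?u - B k))"
          using LDf_int(2) by simp
        show "norm (gr (xi \<omega>') ?u - gr (xi \<omega>') k) \<le> LDf (xi \<omega>') * norm (B ?u - B k)" for \<omega>'
          using grad_lip[OF kd ud] .
      qed
      also have "\<dots> = EL * norm (B ?u - B k)" unfolding EL_def by simp
      also have "\<dots> \<le> EL * \<nu>" using k(2) EL0 by (intro mult_left_mono) auto
      finally show ?thesis by (simp add: mult.commute)
    qed
    have t2: "norm (m k \<omega> - m ?u \<omega>) \<le> \<nu> * Lbar \<omega>"
    proof -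
      have "m k \<omega> - m ?u \<omega> = (1 / real N) *\<^sub>R (\<Sum>i=1..N. gr (xs i \<omega>) k - gr (xs i \<omega>) ?u)"
        unfolding m_def by (simp add: sum_subtractf scaleR_diff_right)
      then have "norm (m k \<omega> - m ?u \<omega>) = (1 / real N) * norm (\<Sum>i=1..N. gr (xs i \<omega>) k - gr (xs i \<omega>) ?u)"
        by simp
      also have "\<dots> \<le> (1 / real N) * (\<Sum>i=1..N. LDf (xs i \<omega>) * \<nu>)"
      proof (intro mult_left_mono order_trans[OF norm_sum] sum_mono)
        fix i
        have "norm (gr (xs i \<omega>) k - gr (xs i \<omega>) ?u) \<le> LDf (xs i \<omega>) * norm (B ?u - B k)"
          using grad_lip[OF kd ud] by (simp add: norm_minus_commute)
        also have "\<dots> \<le> LDf (xs i \<omega>) * \<nu>" using k(2) LDf_nonneg by (intro mult_left_mono) auto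
        finally show "norm (gr (xs i \<omega>) k - gr (xs i \<omega>) ?u) \<le> LDf (xs i \<omega>) * \<nu>" .
      qed simp
      also have "\<dots> = \<nu> * Lbar \<omega>" unfolding Lbar_def sum_distrib_right[symmetric] by simp
      finally show ?thesis .
    qed
    have t3: "norm (\<mu> k - m k \<omega>) \<le> sqrt (Ssum \<omega>)"
    proof (rule real_le_rsqrt)
      show "(norm (\<mu> k - m k \<omega>))\<^sup>2 \<le> Ssum \<omega>"
        unfolding Ssum_def using k(1) F'fin by (intro member_le_sum) auto
    qed
    have tri: "norm (\<mu> ?u - m ?u \<omega>) \<le> \<nu> * EL + \<nu> * Lbar \<omega> + sqrt (Ssum \<omega>)"
    proof -
      have eq: "\<mu> ?u - m ?u \<omega> = (\<mu> ?u - \<mu> k) + (\<mu> k - m k \<omega>) + (m k \<omega> - m ?u \<omega>)" by simp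
      have "norm (\<mu> ?u - m ?u \<omega>) \<le> norm ((\<mu> ?u - \<mu> k) + (\<mu> k - m k \<omega>)) + norm (m k \<omega> - m ?u \<omega>)"
        unfolding eq by (rule norm_triangle_ineq)
      moreover have "norm ((\<mu> ?u - \<mu> k) + (\<mu> k - m k \<omega>)) \<le> norm (\<mu> ?u - \<mu> k) + norm (\<mu> k - m k \<omega>)"
        by (rule norm_triangle_ineq)
      ultimately show ?thesis using t1 t2 t3 by linarith
    qed
    have "(SUP v\<in>D. \<mu> ?u \<bullet> (?u - v) + enn2real (\<psi> ?u) - enn2real (\<psi> v))
        \<le> (SUP v\<in>D. m ?u \<omega> \<bullet> (?u - v) + enn2real (\<psi> ?u) - enn2real (\<psi> v)) + diam * norm (\<mu> ?u - m ?u \<omega>)"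
    proof (rule gap_le[OF Dne])
      show "bdd_above ((\<lambda>v. m ?u \<omega> \<bullet> (?u - v) + enn2real (\<psi> ?u) - enn2real (\<psi> v)) ` D)"
      proof (rule bdd_aboveI2)
        fix v assume v: "v \<in> D"
        have "m ?u \<omega> \<bullet> (?u - v) \<le> norm (m ?u \<omega>) * norm (?u - v)" by (rule norm_cauchy_schwarz)
        also have "\<dots> \<le> norm (m ?u \<omega>) * diam"
          using diameter_bounded_bound[OF Dbd u v] unfolding diam_def dist_norm
          by (intro mult_left_mono) auto
        finally show "m ?u \<omega> \<bullet> (?u - v) + enn2real (\<psi> ?u) - enn2real (\<psi> v) \<le> norm (m ?u \<omega>) * diam + enn2real (\<psi> ?u)"
          using enn2real_nonneg[of "\<psi> v"] by linarith
      qed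
      fix v assume v: "v \<in> D"
      have "\<mu> ?u \<bullet> (?u - v) - m ?u \<omega> \<bullet> (?u - v) = (\<mu> ?u - m ?u \<omega>) \<bullet> (?u - v)" by (simp add: inner_diff_left)
      also have "\<dots> \<le> norm (\<mu> ?u - m ?u \<omega>) * norm (?u - v)" by (rule norm_cauchy_schwarz)
      also have "\<dots> \<le> norm (\<mu> ?u - m ?u \<omega>) * diam"
        using diameter_bounded_bound[OF Dbd u v] unfolding diam_def dist_norm
        by (intro mult_left_mono) auto
      finally show "\<mu> ?u \<bullet> (?u - v) + enn2real (\<psi> ?u) - enn2real (\<psi> v)
          \<le> m ?u \<omega> \<bullet> (?u - v) + enn2real (\<psi> ?u) - enn2real (\<psi> v) + diam * norm (\<mu> ?u - m ?u \<omega>)"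
        by (simp add: mult.commute)
    qed
    also have "diam * norm (\<mu> ?u - m ?u \<omega>) \<le> Dfun \<omega>"
      unfolding Dfun_def using tri diam0 unfolding diam_def by (intro mult_left_mono) auto
    finally show ?thesis unfolding gG gH by simp
  qed
  have ennle: "ennreal x \<le> ennreal y + ennreal d" if "x \<le> y + d" "0 \<le> d" for x y d :: real
  proof (cases "y \<ge> 0")
    case True
    then have "ennreal x \<le> ennreal (y + d)" using that by (intro ennreal_leI)
    then show ?thesis using True that by (simp add: ennreal_plus)
  next
    case False
    then have "ennreal x \<le> ennreal d" using that by (intro ennreal_leI) simp
    also have "\<dots> \<le> ennreal y + ennreal d" by simp
    finally show ?thesis .
  qed
  have Dm: "(\<lambda>\<omega>. ennreal (Dfun \<omega>)) \<in> borel_measurable M"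
    using measurable_compose[OF borel_measurable_integrable[OF conjunct1[OF Dfun_int]] measurable_ennreal] .
  have "(\<integral>\<^sup>+\<omega>. ennreal (gap_fun \<psi> B (\<lambda>w h. \<integral>\<omega>'. blinfun_apply (Dwf w (xi \<omega>')) h \<partial>M) (uN N \<omega>)) \<partial>M)
      \<le> (\<integral>\<^sup>+\<omega>. ennreal (gap_fun \<psi> B
              (\<lambda>w h. (1 / real N) * (\<Sum>i=1..N. blinfun_apply (Dwf w (xs i \<omega>)) h)) (uN N \<omega>)) \<partial>M)
        + (\<integral>\<^sup>+\<omega>. ennreal (Dfun \<omega>) \<partial>M)"
    by (rule nn_integral_add_le_meas[OF Dm]) (intro ennle pw Dfun0)
  also have "(\<integral>\<^sup>+\<omega>. ennreal (Dfun \<omega>) \<partial>M) = ennreal (\<integral>\<omega>. Dfun \<omega> \<partial>M)"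
    using Dfun_int Dfun0 by (intro nn_integral_eq_integral) auto
  also have "\<dots> \<le> ennreal (2 * (\<integral>\<omega>. LDf (xi \<omega>) \<partial>M) * diameter (dom_psi \<psi>) * \<nu>
          + sqrt 3 * \<tau> * diameter (dom_psi \<psi>) / sqrt (real N)
            * sqrt (real (covering_number \<nu> (B ` dom_psi \<psi>))))"
    using Dfun_int unfolding EL_def K_def S_def D_def by (intro ennreal_leI) simp
  finally show "(\<integral>\<^sup>+\<omega>. ennreal (gap_fun \<psi> B (\<lambda>w h. \<integral>\<omega>'. blinfun_apply (Dwf w (xi \<omega>')) h \<partial>M) (uN N \<omega>)) \<partial>M)
    \<le> (\<integral>\<^sup>+\<omega>. ennreal (gap_fun \<psi> B
              (\<lambda>w h. (1 / real N) * (\<Sum>i=1..N. blinfun_apply (Dwf w (xs i \<omega>)) h)) (uN N \<omega>)) \<partial>M)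
      + ennreal (2 * (\<integral>\<omega>. LDf (xi \<omega>) \<partial>M) * diameter (dom_psi \<psi>) * \<nu>
          + sqrt 3 * \<tau> * diameter (dom_psi \<psi>) / sqrt (real N)
            * sqrt (real (covering_number \<nu> (B ` dom_psi \<psi>))))"
    by (simp add: add_left_mono)
qed

end
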